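(* Let $\zeta:[\sigma,\tau]\to\mathbb R$ be a continuous, strictly increasing, Lipschitz function with $\zeta(\sigma)=0$, and let $F\subset[\sigma,\tau]$ be closed with $\sigma,\tau\in F$ and $\lambda(F)=0$. Then $\lambda(\sqrt{\zeta}(F))=0$, where $\sqrt{\zeta}(x):=\sqrt{\zeta(x)}$ for $x\in[\sigma,\tau]$.
   Context: $\lambda$ denotes Lebesgue measure on $\mathbb R$. *)

theory Defs
  imports "HOL-Analysis.Analysis"
begin

end

theory Submission
  imports Defs
begin

lemma sqrt_diff_bound:
  fixes a b m :: real
  assumes "m > 0" "a \<ge> m" "b \<ge> m"
  shows "\<bar>sqrt a - sqrt b\<bar> \<le> \<bar>a - b\<bar> / (2 * sqrt m)"
proof -
  have sa: "sqrt a \<ge> sqrt m" "sqrt b \<ge> sqrt m" using assms by auto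
  have pm: "sqrt m > 0" using assms by auto
  have e: "\<bar>sqrt a - sqrt b\<bar> * (sqrt a + sqrt b) = \<bar>a - b\<bar>"
  proof -
    have "(sqrt a - sqrt b) * (sqrt a + sqrt b) = a - b"
      using assms by (simp add: algebra_simps)
    moreover have "sqrt a + sqrt b \<ge> 0" using sa pm by linarith
    ultimately show ?thesis by (metis abs_mult abs_of_nonneg)
  qed
  have "\<bar>sqrt a - sqrt b\<bar> * (2 * sqrt m) \<le> \<bar>sqrt a - sqrt b\<bar> * (sqrt a + sqrt b)"
    using sa by (intro mult_left_mono) linarith+
  then have "\<bar>sqrt a - sqrt b\<bar> * (2 * sqrt m) \<le> \<bar>a - b\<bar>" using e by simp
  then show ?thesis using pm by (simp add: field_simps)
qed

theorem lemma3p2: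
  fixes \<zeta> :: "real \<Rightarrow> real" and \<sigma> \<tau> L :: real and F :: "real set"
  assumes "continuous_on {\<sigma>..\<tau>} \<zeta>"
    and "strict_mono_on {\<sigma>..\<tau>} \<zeta>"
    and "L-lipschitz_on {\<sigma>..\<tau>} \<zeta>"
    and "\<zeta> \<sigma> = 0"
    and "closed F" and "F \<subseteq> {\<sigma>..\<tau>}" and "\<sigma> \<in> F" and "\<tau> \<in> F"
    and "F \<in> null_sets lebesgue"
  shows "(\<lambda>x. sqrt (\<zeta> x)) ` F \<in> null_sets lebesgue"
proof -
  let ?S = "F - {\<sigma>}"
  let ?f = "\<lambda>x. sqrt (\<zeta> x)"
  have negS: "negligible ?S"
    using assms(9) negligible_iff_null_sets negligible_subset by blast
  have "negligible (?f ` ?S)"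
  proof (rule negligible_locally_Lipschitz_image)
    show "DIM(real) \<le> DIM(real)" by simp
    show "negligible ?S" by (rule negS)
    fix x assume x: "x \<in> ?S"
    then have xs: "x \<in> {\<sigma>..\<tau>}" "x > \<sigma>" using assms(6) by force+
    define c where "c = (x + \<sigma>) / 2"
    have c: "c \<in> {\<sigma>..\<tau>}" "c > \<sigma>" "c < x" using xs by (auto simp: c_def)
    have zc: "\<zeta> c > 0"
      using assms(2) assms(4) c by (metis atLeastAtMost_iff order_refl strict_mono_onD
          \<open>\<sigma> \<in> F\<close> assms(6) subsetD)
    have zx: "\<zeta> x \<ge> \<zeta> c" using assms(2) c xs strict_mono_onD by fastforce
    show "\<exists>T B. open T \<and> x \<in> T \<and> (\<forall>y \<in> ?S \<inter> T. norm(?f y - ?f x) \<le> B * norm(y - x))"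
    proof (intro exI conjI ballI)
      show "open {c<..}" by simp
      show "x \<in> {c<..}" using c by simp
      fix y assume y: "y \<in> ?S \<inter> {c<..}"
      then have ys: "y \<in> {\<sigma>..\<tau>}" "y > c" using assms(6) by force+
      have zy: "\<zeta> y \<ge> \<zeta> c" using assms(2) c ys strict_mono_onD by fastforce
      have "\<bar>?f y - ?f x\<bar> \<le> \<bar>\<zeta> y - \<zeta> x\<bar> / (2 * sqrt (\<zeta> c))"
        by (rule sqrt_diff_bound[OF zc zy zx])
      also have "\<bar>\<zeta> y - \<zeta> x\<bar> \<le> L * \<bar>y - x\<bar>"
        using lipschitz_onD[OF assms(3) ys(1) xs(1)] by (simp add: dist_real_def)
      then have "\<bar>\<zeta> y - \<zeta> x\<bar> / (2 * sqrt (\<zeta> c)) \<le> L * \<bar>y - x\<bar> / (2 * sqrt (\<zeta> c))"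
        using zc by (intro divide_right_mono) auto
      finally show "norm (?f y - ?f x) \<le> (L / (2 * sqrt (\<zeta> c))) * norm (y - x)"
        by simp
    qed
  qed
  moreover have "?f ` F = insert 0 (?f ` ?S)"
    using assms(4) assms(7) by auto
  ultimately show ?thesis
    by (simp add: negligible_iff_null_sets)
qed

end
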